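(* There exist numerical constants $c_1,c_0'>0$ such that, in the Gaussian $G$-latent setting below, with probability at least $1-c_0'/p$, $$|\langle W_2,B^*-B\rangle|\le c_1\sqrt{\log p}\,|\Gamma|_\infty^{1/2}\sum_{j\neq k}|\mathbf{Z}_{:j}-\mathbf{Z}_{:k}|_2\,|B_{G_jG_k}|_1$$ simultaneously for all $B\in\mathcal{C}_0$, where $W_2$ is the $p\times p$ matrix with $(W_2)_{ab}=\langle\mathbf{E}_{:b}-\mathbf{E}_{:a},\ \mathbf{Z}_{:k(a)}-\mathbf{Z}_{:k(b)}\rangle$.
   Context: Setting: $G=\{G_1,\dots,G_K\}$ is a partition of $[p]$ into nonempty groups, $k(a)$ the index with $a\in G_{k(a)}$. $X$ satisfies $X_a=Z_{k(a)}+E_a$, with $Z\sim N(0,C)$ in $\mathbb{R}^K$ and $E\sim N(0,\Gamma)$ in $\mathbb{R}^p$ independent, $\Gamma$ diagonal with $\Gamma_{aa}=\gamma_{k(a)}>0$. $n$ i.i.d. copies $(Z^{(i)},E^{(i)})$ are stacked as rows of the $n\times K$ matrix $\mathbf{Z}$ and the $n\times p$ matrix $\mathbf{E}$; $M_{:a}$ denotes column $a$. $|M|_\infty$ is the largest absolute entry; $B_{G_jG_k}=(B_{ab})_{a\in G_j,b\in G_k}$ and $|M|_1$ is the sum of absolute entries. $B^*_{ab}=1/|G_k|$ if $a,b\in G_k$, else $0$. $\langle M,N\rangle=\mathrm{tr}(M^tN)$. $\mathcal{C}_0$ is the set of symmetric positive semidefinite $p\times p$ matrices $B$ with $\sum_aB_{ab}=1$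 for all $b$ and $B_{ab}\ge0$ for all $a,b$. *)

theory Defs
  imports "HOL-Probability.Probability"
begin

text \<open>Indices: variables a are in {..<p}, groups j in {..<K}, samples i in {..<n}.
  The partition G is encoded by the group-index map k (k a = index of the group of a).\<close>

definition is_partition_map :: "nat \<Rightarrow> nat \<Rightarrow> (nat \<Rightarrow> nat) \<Rightarrow> bool" where
  "is_partition_map p K k \<longleftrightarrow> (\<forall>a<p. k a < K) \<and> (\<forall>j<K. \<exists>a<p. k a = j)"

definition gaussian_vec :: "'w measure \<Rightarrow> 'i set \<Rightarrow> ('i \<Rightarrow> 'i \<Rightarrow> real) \<Rightarrow> ('w \<Rightarrow> 'i \<Rightarrow> real) \<Rightarrow> bool" where
  "gaussian_vec M I C X \<longleftrightarrow>
     (\<forall>j\<in>I. (\<lambda>w. X w j) \<in> borel_measurable M) \<and>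
     (\<forall>u::'i \<Rightarrow> real. (CLINT w|M. cis (\<Sum>j\<in>I. u j * X w j))
        = complex_of_real (exp (- (\<Sum>j\<in>I. \<Sum>l\<in>I. u j * C j l * u l) / 2)))"

text \<open>Matrix row i of the n x K matrix Z is (Z w i j)_j ; column j is (Z w i j)_i.\<close>
definition col_dist :: "nat \<Rightarrow> (nat \<Rightarrow> nat \<Rightarrow> real) \<Rightarrow> nat \<Rightarrow> nat \<Rightarrow> real" where
  "col_dist n Z j l = sqrt (\<Sum>i<n. (Z i j - Z i l)^2)"

definition W2 :: "nat \<Rightarrow> (nat \<Rightarrow> nat) \<Rightarrow> (nat \<Rightarrow> nat \<Rightarrow> real) \<Rightarrow> (nat \<Rightarrow> nat \<Rightarrow> real) \<Rightarrow> nat \<Rightarrow> nat \<Rightarrow> real" where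
  "W2 n k Z E a b = (\<Sum>i<n. (E i b - E i a) * (Z i (k a) - Z i (k b)))"

definition Bstar :: "nat \<Rightarrow> (nat \<Rightarrow> nat) \<Rightarrow> nat \<Rightarrow> nat \<Rightarrow> real" where
  "Bstar p k a b = (if k a = k b then 1 / real (card {c. c < p \<and> k c = k a}) else 0)"

definition frob_inner :: "nat \<Rightarrow> (nat \<Rightarrow> nat \<Rightarrow> real) \<Rightarrow> (nat \<Rightarrow> nat \<Rightarrow> real) \<Rightarrow> real" where
  "frob_inner p A B = (\<Sum>a<p. \<Sum>b<p. A a b * B a b)"

definition C0 :: "nat \<Rightarrow> (nat \<Rightarrow> nat \<Rightarrow> real) set" where
  "C0 p = {B. (\<forall>a<p. \<forall>b<p. B a b = B b a) \<and>
              (\<forall>v. 0 \<le> (\<Sum>a<p. \<Sum>b<p. v a * B a b * v b)) \<and>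
              (\<forall>b<p. (\<Sum>a<p. B a b) = 1) \<and>
              (\<forall>a<p. \<forall>b<p. 0 \<le> B a b)}"

definition block_l1 :: "nat \<Rightarrow> (nat \<Rightarrow> nat) \<Rightarrow> (nat \<Rightarrow> nat \<Rightarrow> real) \<Rightarrow> nat \<Rightarrow> nat \<Rightarrow> real" where
  "block_l1 p k B j l = (\<Sum>a\<in>{a. a < p \<and> k a = j}. \<Sum>b\<in>{b. b < p \<and> k b = l}. \<bar>B a b\<bar>)"

definition Gamma_sup :: "nat \<Rightarrow> (nat \<Rightarrow> nat) \<Rightarrow> (nat \<Rightarrow> real) \<Rightarrow> real" where
  "Gamma_sup p k \<gamma> = Max ((\<lambda>a. \<gamma> (k a)) ` {..<p})"

end

theory Submission
  imports Defs
begin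

lemma fact_ratio_le: "fact (2*k) / (2^k * fact k) \<le> (2 * real k) ^ k"
proof -
  have d: "fact k dvd (fact (2*k) :: nat)" by (rule fact_dvd) simp
  have "fact (2*k) div fact (2*k - k) \<le> (2*k) ^ k" by (rule fact_div_fact_le_pow) simp
  hence "fact (2*k) div fact k \<le> (2*k) ^ k" by simp
  hence "real (fact (2*k) div fact k) \<le> real ((2*k)^k)" by linarith
  hence "fact (2*k) / fact k \<le> (2*real k)^k"
    using d by (simp add: real_of_nat_div of_nat_fact)
  moreover have "fact (2*k) / (2^k * fact k) \<le> fact (2*k) / (fact k :: real)"
    by (intro divide_left_mono) (auto simp: fact_gt_zero)
  ultimately show ?thesis by linarith
qed

lemma std_normal_tail:
  fixes x :: real assumes "x > 0"
  shows "measure std_normal_distribution {y. x \<le> \<bar>y\<bar>} \<le> (2 * real k) ^ k / x^(2*k)"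
proof -
  interpret N: prob_space std_normal_distribution using real_dist_normal_dist by (simp add: real_distribution_def)
  have sp: "space std_normal_distribution = UNIV" by simp
  have "measure std_normal_distribution {y. x \<le> \<bar>y\<bar>}
      \<le> measure std_normal_distribution {y \<in> space std_normal_distribution. \<bar>y\<bar>^(2*k) \<ge> x^(2*k)}"
    using assms by (intro N.finite_measure_mono) (auto intro!: power_mono simp: sp)
  also have "\<dots> \<le> (\<integral>y. \<bar>y\<bar>^(2*k) \<partial>std_normal_distribution) / x^(2*k)"
    apply (rule integral_Markov_inequality_measure[where A=UNIV])
    using assms
       apply (auto simp: sp)
    using std_normal_distribution_even_moments(2)[of k] by (simp add: power_even_abs)
  also have "\<dots> = fact (2*k) / (2^k * fact k) / x^(2*k)"
    by (simp add: std_normal_distribution_even_moments_abs)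
  also have "\<dots> \<le> (2 * real k) ^ k / x^(2*k)"
    using assms by (intro divide_right_mono fact_ratio_le) auto
  finally show ?thesis .
qed

lemma (in prob_space) sum_std_normal:
  assumes fin: "finite I" and ind: "indep_vars (\<lambda>_. borel) X I"
    and ch: "\<And>i t. i \<in> I \<Longrightarrow> (CLINT w|M. iexp (t * X i w)) = complex_of_real (exp (- (t^2 * v i) / 2))"
    and v1: "(\<Sum>i\<in>I. v i) = 1"
  shows "distr M borel (\<lambda>w. \<Sum>i\<in>I. X i w) = std_normal_distribution"
proof (rule Levy_uniqueness)
  have rv: "\<And>i. i \<in> I \<Longrightarrow> random_variable borel (X i)"
    using ind unfolding indep_vars_def by auto
  hence "random_variable borel (\<lambda>w. \<Sum>i\<in>I. X i w)" by auto
  thus "real_distribution (distr M borel (\<lambda>w. \<Sum>i\<in>I. X i w))"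
    by (simp add: real_distribution_distr)
  show "real_distribution std_normal_distribution" by (rule real_dist_normal_dist)
  show "char (distr M borel (\<lambda>w. \<Sum>i\<in>I. X i w)) = char std_normal_distribution"
  proof
    fix t
    have "char (distr M borel (\<lambda>w. \<Sum>i\<in>I. X i w)) t = (\<Prod>i\<in>I. char (distr M borel (X i)) t)"
      by (rule char_distr_sum[OF ind])
    also have "\<dots> = (\<Prod>i\<in>I. complex_of_real (exp (- (t^2 * v i) / 2)))"
      using ch by (intro prod.cong refl) (simp add: char_def integral_distr rv)
    also have "\<dots> = complex_of_real (exp (\<Sum>i\<in>I. - (t^2 * v i) / 2))"
      by (simp add: exp_sum fin)
    also have "(\<Sum>i\<in>I. - (t^2 * v i) / 2) = - (t^2 * (\<Sum>i\<in>I. v i)) / 2"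
      by (simp add: sum_distrib_left sum_divide_distrib sum_negf)
    also have "\<dots> = - (t^2) / 2" using v1 by simp
    finally show "char (distr M borel (\<lambda>w. \<Sum>i\<in>I. X i w)) t = char std_normal_distribution t"
      by (simp add: char_std_normal_distribution)
  qed
qed

lemma (in prob_space) gauss_char_diff:
  fixes p :: nat
  assumes G: "gaussian_vec M {..<p} (\<lambda>a b. if a = b then g a else 0) F"
    and ab: "a < p" "b < p" "a \<noteq> b"
  shows "(CLINT w|M. iexp (\<tau> * ((F w b - F w a) * d))) = complex_of_real (exp (- (\<tau>^2 * (d^2 * (g a + g b))) / 2))"
proof -
  define u where "u = (\<lambda>a'. \<tau> * d * ((if a' = b then 1 else 0) - (if a' = a then 1 else 0)))"
  have s1: "(\<Sum>j\<in>{..<p}. u j * F w j) = \<tau> * ((F w b - F w a) * d)" for w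
  proof -
    have "(\<Sum>j\<in>{..<p}. u j * F w j) = \<tau> * d * ((\<Sum>j\<in>{..<p}. (if j = b then F w j else 0)) - (\<Sum>j\<in>{..<p}. (if j = a then F w j else 0)))"
    proof -
      have "(\<Sum>j\<in>{..<p}. u j * F w j) = (\<Sum>j\<in>{..<p}. \<tau> * d * ((if j = b then F w j else 0) - (if j = a then F w j else 0)))"
        unfolding u_def by (intro sum.cong refl) auto
      thus ?thesis by (simp only: sum_distrib_left[symmetric] sum_subtractf)
    qed
    also have "\<dots> = \<tau> * ((F w b - F w a) * d)"
    proof -
      have 1: "(\<Sum>j<p. if j = b then F w j else 0) = F w b" using ab by (subst sum.delta) auto
      have 2: "(\<Sum>j<p. if j = a then F w j else 0) = F w a" using ab by (subst sum.delta) auto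
      show ?thesis by (simp only: lessThan_def[symmetric] 1 2) (simp add: algebra_simps)
    qed
    finally show ?thesis .
  qed
  have s2: "(\<Sum>j\<in>{..<p}. \<Sum>l\<in>{..<p}. u j * (if j = l then g j else 0) * u l) = \<tau>^2 * (d^2 * (g a + g b))"
  proof -
    have "(\<Sum>j\<in>{..<p}. \<Sum>l\<in>{..<p}. u j * (if j = l then g j else 0) * u l) = (\<Sum>j\<in>{..<p}. u j * g j * u j)"
    proof (intro sum.cong refl)
      fix j assume "j \<in> {..<p}"
      have "(\<Sum>l\<in>{..<p}. u j * (if j = l then g j else 0) * u l) = (\<Sum>l\<in>{..<p}. if j = l then u j * g j * u l else 0)"
        by (intro sum.cong refl) auto
      also have "\<dots> = u j * g j * u j" using \<open>j \<in> {..<p}\<close> by (subst sum.delta') auto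
      finally show "(\<Sum>l\<in>{..<p}. u j * (if j = l then g j else 0) * u l) = u j * g j * u j" .
    qed
    also have "\<dots> = (\<Sum>j\<in>{..<p}. (if j = b then (\<tau> * d)^2 * g b else 0) + (if j = a then (\<tau> * d)^2 * g a else 0))"
      unfolding u_def using ab by (intro sum.cong refl) (auto simp: power2_eq_square)
    also have "\<dots> = \<tau>^2 * (d^2 * (g a + g b))" using ab by (simp add: sum.distrib power_mult_distrib algebra_simps)
    finally show ?thesis .
  qed
  have "(CLINT w|M. cis (\<Sum>j\<in>{..<p}. u j * F w j)) = complex_of_real (exp (- (\<Sum>j\<in>{..<p}. \<Sum>l\<in>{..<p}. u j * (if j = l then g j else 0) * u l) / 2))"
    using G unfolding gaussian_vec_def by blast
  thus ?thesis unfolding s1 s2 by (simp add: cis_conv_exp)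
qed

lemma (in prob_space) E_tail:
  fixes F :: "'t \<Rightarrow> 'a \<Rightarrow> nat \<Rightarrow> real" and p :: nat and c :: "'t \<Rightarrow> real"
  assumes fin: "finite J"
    and ind: "indep_vars (\<lambda>_. PiM {..<p} (\<lambda>_. borel)) (\<lambda>t w. restrict (F t w) {..<p}) J"
    and G: "\<And>t. t \<in> J \<Longrightarrow> gaussian_vec M {..<p} (\<lambda>a b. if a = b then g a else 0) (F t)"
    and ab: "a < p" "b < p" "a \<noteq> b" and gpos: "g a > 0" "g b > 0" and x: "x > 0"
  shows "measure M {w\<in>space M. x * sqrt (g a + g b) * sqrt (\<Sum>t\<in>J. (c t)^2) < \<bar>\<Sum>t\<in>J. (F t w b - F t w a) * c t\<bar>}
     \<le> (2 * real k) ^ k / x^(2*k)"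
proof (cases "(\<Sum>t\<in>J. (c t)^2) = 0")
  case True
  hence "\<forall>t\<in>J. c t = 0" using fin by (subst (asm) sum_nonneg_eq_0_iff) auto
  hence e: "{w\<in>space M. x * sqrt (g a + g b) * sqrt (\<Sum>t\<in>J. (c t)^2) < \<bar>\<Sum>t\<in>J. (F t w b - F t w a) * c t\<bar>} = {}"
    using True by auto
  have "0 \<le> (2 * real k) ^ k / x^(2*k)" using x by simp
  thus ?thesis by (simp only: e measure_empty)
next
  case False
  define S where "S = (\<Sum>t\<in>J. (c t)^2)"
  have Spos: "S > 0" using False unfolding S_def by (metis sum_nonneg zero_le_power2 order_le_less)
  define s where "s = sqrt (g a + g b) * sqrt S"
  have spos: "s > 0" unfolding s_def using Spos gpos by auto
  define X where "X = (\<lambda>t w. (F t w b - F t w a) * (c t / s))"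
  define v where "v = (\<lambda>t. (c t / s)^2 * (g a + g b))"
  have indX: "indep_vars (\<lambda>_. borel) X J"
  proof -
    have "indep_vars (\<lambda>_. borel) (\<lambda>t w. (\<lambda>f. (f b - f a) * (c t / s)) (restrict (F t w) {..<p})) J"
      by (rule indep_vars_compose2[OF ind]) (use ab in auto)
    thus ?thesis unfolding X_def using ab by simp
  qed
  have chX: "(CLINT w|M. iexp (\<tau> * X t w)) = complex_of_real (exp (- (\<tau>^2 * v t) / 2))" if "t \<in> J" for t \<tau>
    unfolding X_def v_def by (rule gauss_char_diff[OF G[OF that] ab])
  have v1: "(\<Sum>t\<in>J. v t) = 1"
  proof -
    have "(\<Sum>t\<in>J. v t) = (\<Sum>t\<in>J. (c t)^2) * (g a + g b) / s^2"
      unfolding v_def by (simp add: sum_distrib_right sum_divide_distrib power_divide)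
    also have "s^2 = (g a + g b) * S" unfolding s_def using gpos Spos by (simp add: power_mult_distrib)
    finally show ?thesis using gpos Spos unfolding S_def by simp
  qed
  have D: "distr M borel (\<lambda>w. \<Sum>t\<in>J. X t w) = std_normal_distribution"
    by (rule sum_std_normal[OF fin indX chX v1])
  have rv: "random_variable borel (\<lambda>w. \<Sum>t\<in>J. X t w)"
    using indX unfolding indep_vars_def by (intro borel_measurable_sum) auto
  have sub: "{w\<in>space M. x * sqrt (g a + g b) * sqrt (\<Sum>t\<in>J. (c t)^2) < \<bar>\<Sum>t\<in>J. (F t w b - F t w a) * c t\<bar>}
      \<subseteq> (\<lambda>w. \<Sum>t\<in>J. X t w) -` {y. x \<le> \<bar>y\<bar>} \<inter> space M"
  proof (intro subsetI)
    fix w assume "w \<in> {w\<in>space M. x * sqrt (g a + g b) * sqrt (\<Sum>t\<in>J. (c t)^2) < \<bar>\<Sum>t\<in>J. (F t w b - F t w a) * c t\<bar>}"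
    hence wM: "w \<in> space M" and lt: "x * sqrt (g a + g b) * sqrt (\<Sum>t\<in>J. (c t)^2) < \<bar>\<Sum>t\<in>J. (F t w b - F t w a) * c t\<bar>" by auto
    have eq: "(\<Sum>t\<in>J. X t w) = (\<Sum>t\<in>J. (F t w b - F t w a) * c t) / s"
      unfolding X_def by (simp add: sum_divide_distrib)
    have "x * s < \<bar>\<Sum>t\<in>J. (F t w b - F t w a) * c t\<bar>" using lt unfolding s_def S_def by (simp add: mult.assoc)
    hence "x < \<bar>\<Sum>t\<in>J. (F t w b - F t w a) * c t\<bar> / s" using spos by (simp add: field_simps)
    hence "x \<le> \<bar>\<Sum>t\<in>J. X t w\<bar>" unfolding eq using spos by simp
    thus "w \<in> (\<lambda>w. \<Sum>t\<in>J. X t w) -` {y. x \<le> \<bar>y\<bar>} \<inter> space M" using wM by simp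
  qed
  have "measure M {w\<in>space M. x * sqrt (g a + g b) * sqrt (\<Sum>t\<in>J. (c t)^2) < \<bar>\<Sum>t\<in>J. (F t w b - F t w a) * c t\<bar>}
     \<le> measure M ((\<lambda>w. \<Sum>t\<in>J. X t w) -` {y. x \<le> \<bar>y\<bar>} \<inter> space M)"
    using sub rv by (intro finite_measure_mono) (auto intro!: measurable_sets)
  also have "\<dots> = measure (distr M borel (\<lambda>w. \<Sum>t\<in>J. X t w)) {y. x \<le> \<bar>y\<bar>}"
    using rv by (subst measure_distr) auto
  also have "\<dots> \<le> (2 * real k) ^ k / x^(2*k)" unfolding D by (rule std_normal_tail[OF x])
  finally show ?thesis .
qed

lemma (in prob_space) indep_bound:
  assumes ind: "indep_var N1 X N2 Y" and Gm: "G \<in> borel_measurable (N1 \<Otimes>\<^sub>M N2)"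
    and inner: "\<And>z. z \<in> space N1 \<Longrightarrow> (\<integral>\<^sup>+ w. G (z, Y w) \<partial>M) \<le> ennreal \<delta>"
  shows "(\<integral>\<^sup>+ w. G (X w, Y w) \<partial>M) \<le> ennreal \<delta>"
proof -
  have rvX[measurable]: "X \<in> measurable M N1" and rvY[measurable]: "Y \<in> measurable M N2"
    using ind by (blast dest: indep_var_rv1 indep_var_rv2)+
  have eq: "distr M N1 X \<Otimes>\<^sub>M distr M N2 Y = distr M (N1 \<Otimes>\<^sub>M N2) (\<lambda>x. (X x, Y x))"
    using ind by (simp add: indep_var_distribution_eq)
  interpret PY: prob_space "distr M N2 Y" by (rule prob_space_distr) simp
  interpret PX: prob_space "distr M N1 X" by (rule prob_space_distr) simp
  have Gm': "G \<in> borel_measurable (distr M N1 X \<Otimes>\<^sub>M distr M N2 Y)"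
    using Gm by (simp add: measurable_cong_sets[OF sets_pair_measure_cong[OF sets_distr sets_distr] refl])
  have "(\<integral>\<^sup>+ w. G (X w, Y w) \<partial>M) = integral\<^sup>N (distr M (N1 \<Otimes>\<^sub>M N2) (\<lambda>x. (X x, Y x))) G"
    using Gm by (subst nn_integral_distr) auto
  also have "\<dots> = integral\<^sup>N (distr M N1 X \<Otimes>\<^sub>M distr M N2 Y) G" by (simp add: eq)
  also have "\<dots> = (\<integral>\<^sup>+ z. \<integral>\<^sup>+ e. G (z, e) \<partial>distr M N2 Y \<partial>distr M N1 X)"
    by (rule PY.nn_integral_fst[symmetric, OF Gm'])
  also have "\<dots> \<le> (\<integral>\<^sup>+ z. ennreal \<delta> \<partial>distr M N1 X)"
  proof (rule nn_integral_mono)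
    fix z assume "z \<in> space (distr M N1 X)"
    hence z: "z \<in> space N1" by simp
    have "(\<lambda>e. G (z, e)) \<in> borel_measurable N2" by (rule measurable_Pair2[OF Gm z])
    hence "(\<integral>\<^sup>+ e. G (z, e) \<partial>distr M N2 Y) = (\<integral>\<^sup>+ w. G (z, Y w) \<partial>M)"
      by (subst nn_integral_distr) auto
    also have "\<dots> \<le> ennreal \<delta>" by (rule inner[OF z])
    finally show "(\<integral>\<^sup>+ e. G (z, e) \<partial>distr M N2 Y) \<le> ennreal \<delta>" .
  qed
  also have "\<dots> = ennreal \<delta>" using PX.emeasure_space_1 by simp
  finally show ?thesis .
qed

lemma numerics:
  fixes p :: nat and x :: real
  assumes p: "p \<ge> 4" and x: "x > 0" and xx: "x^2 \<ge> 32 * ln (real p)"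
  shows "(2 * real (nat \<lceil>3 * ln (real p)\<rceil>)) ^ (nat \<lceil>3 * ln (real p)\<rceil>) / x^(2 * nat \<lceil>3 * ln (real p)\<rceil>) \<le> 1 / real p ^ 3"
proof -
  define L where "L = ln (real p)"
  define k where "k = nat \<lceil>3 * L\<rceil>"
  have p4: "(4::real) \<le> real p" using p by simp
  have e4: "exp 1 < (4::real)" using exp_le by linarith
  have "exp 1 < real p" using p4 e4 by linarith
  hence "ln (exp 1) < ln (real p)" using ln_less_cancel_iff[of "exp 1" "real p"] p by simp
  hence L1: "L > 1" unfolding L_def by simp
  have kk: "3 * L \<le> real k \<and> real k \<le> 4 * L"
  proof -
    have "real k = of_int \<lceil>3 * L\<rceil>" unfolding k_def using L1 by simp
    moreover have "3 * L \<le> of_int \<lceil>3 * L\<rceil>" by (rule le_of_int_ceiling)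
    moreover have "of_int \<lceil>3 * L\<rceil> \<le> 3 * L + 1" by (rule of_int_ceiling_le_add_one)
    ultimately show ?thesis using L1 by linarith
  qed
  hence k1: "3 * L \<le> real k" and k2: "real k \<le> 4 * L" by auto
  have xpos: "x^2 > 0" using x by simp
  have "(2 * real k) ^ k / x^(2*k) = (2 * real k / x^2) ^ k" by (simp add: power_divide power_mult)
  also have "\<dots> \<le> (1/4) ^ k"
  proof (rule power_mono)
    have "2 * real k \<le> 8 * L" using k2 by simp
    also have "\<dots> = (1/4) * (32 * L)" by simp
    also have "\<dots> \<le> (1/4) * x^2" using xx unfolding L_def by simp
    finally show "2 * real k / x^2 \<le> 1/4" using xpos by (simp add: field_simps)
    show "0 \<le> 2 * real k / x^2" using xpos by simp
  qed
  also have "\<dots> \<le> 1 / real p ^ 3"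
  proof -
    have "exp 1 \<le> (4::real)" using exp_le by linarith
    hence "exp 1 ^ k \<le> (4::real) ^ k" by (intro power_mono) auto
    moreover have "exp (real k) = exp 1 ^ k" using exp_of_nat_mult[of k 1] by simp
    ultimately have e: "exp (real k) \<le> 4 ^ k" by simp
    have "exp (3 * L) = exp L ^ 3" using exp_of_nat_mult[of 3 L] by simp
    also have "exp L = real p" unfolding L_def using p by simp
    finally have "real p ^ 3 = exp (3 * L)" by simp
    also have "\<dots> \<le> exp (real k)" using k1 by simp
    also have "\<dots> \<le> 4 ^ k" by (rule e)
    finally have "real p ^ 3 \<le> 4 ^ k" .
    moreover have "real p ^ 3 > 0" using p by simp
    ultimately show ?thesis by (simp add: power_divide field_simps)
  qed
  finally show ?thesis unfolding k_def L_def .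
qed

lemma regroup:
  fixes h :: "nat \<Rightarrow> nat \<Rightarrow> real" and k :: "nat \<Rightarrow> nat"
  assumes kK: "\<forall>a<p. k a < K"
  shows "(\<Sum>a<p. \<Sum>b<p. h a b) = (\<Sum>j<K. \<Sum>l<K. \<Sum>a\<in>{a. a < p \<and> k a = j}. \<Sum>b\<in>{b. b < p \<and> k b = l}. h a b)"
proof -
  have im: "k ` {..<p} \<subseteq> {..<K}" using kK by auto
  have 1: "(\<Sum>b<p. h a b) = (\<Sum>l<K. \<Sum>b\<in>{b. b < p \<and> k b = l}. h a b)" for a
    using sum.group[OF finite_lessThan finite_lessThan im, of "h a"] by (simp add: lessThan_def)
  have "(\<Sum>a<p. \<Sum>b<p. h a b) = (\<Sum>a<p. \<Sum>l<K. \<Sum>b\<in>{b. b < p \<and> k b = l}. h a b)"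
    using 1 by simp
  also have "\<dots> = (\<Sum>j<K. \<Sum>a\<in>{a. a < p \<and> k a = j}. \<Sum>l<K. \<Sum>b\<in>{b. b < p \<and> k b = l}. h a b)"
    using sum.group[OF finite_lessThan finite_lessThan im, of "\<lambda>a. \<Sum>l<K. \<Sum>b\<in>{b. b < p \<and> k b = l}. h a b"]
    by (simp add: lessThan_def)
  also have "\<dots> = (\<Sum>j<K. \<Sum>l<K. \<Sum>a\<in>{a. a < p \<and> k a = j}. \<Sum>b\<in>{b. b < p \<and> k b = l}. h a b)"
    by (intro sum.cong refl sum.swap)
  finally show ?thesis .
qed

lemma det_bound:
  fixes W B :: "nat \<Rightarrow> nat \<Rightarrow> real" and cd :: "nat \<Rightarrow> nat \<Rightarrow> real"
  assumes kK: "\<forall>a<p. k a < K"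
    and W0: "\<And>a b. a < p \<Longrightarrow> b < p \<Longrightarrow> k a = k b \<Longrightarrow> W a b = 0"
    and Wb: "\<And>a b. a < p \<Longrightarrow> b < p \<Longrightarrow> k a \<noteq> k b \<Longrightarrow> \<bar>W a b\<bar> \<le> T * cd (k a) (k b)"
    and Bnn: "\<And>a b. a < p \<Longrightarrow> b < p \<Longrightarrow> 0 \<le> B a b"
  shows "\<bar>frob_inner p W (\<lambda>a b. Bstar p k a b - B a b)\<bar>
     \<le> T * (\<Sum>j<K. \<Sum>l\<in>{..<K} - {j}. cd j l * block_l1 p k B j l)"
proof -
  define h where "h = (\<lambda>a b. if k a = k b then 0 else T * cd (k a) (k b) * B a b)"
  have "\<bar>frob_inner p W (\<lambda>a b. Bstar p k a b - B a b)\<bar> \<le> (\<Sum>a<p. \<Sum>b<p. \<bar>W a b * (Bstar p k a b - B a b)\<bar>)"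
    unfolding frob_inner_def by (rule order.trans[OF sum_abs sum_mono]) (rule sum_abs)
  also have "\<dots> \<le> (\<Sum>a<p. \<Sum>b<p. h a b)"
  proof (intro sum_mono)
    fix a b assume a: "a \<in> {..<p}" and b: "b \<in> {..<p}"
    show "\<bar>W a b * (Bstar p k a b - B a b)\<bar> \<le> h a b"
    proof (cases "k a = k b")
      case True thus ?thesis using W0 a b unfolding h_def by simp
    next
      case False
      hence "\<bar>W a b * (Bstar p k a b - B a b)\<bar> = \<bar>W a b\<bar> * B a b"
        using Bnn a b by (simp add: Bstar_def abs_mult)
      also have "\<dots> \<le> T * cd (k a) (k b) * B a b"
        using Wb[of a b] False a b Bnn[of a b] by (intro mult_right_mono) auto
      finally show ?thesis using False unfolding h_def by simp
    qed
  qed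
  also have "\<dots> = (\<Sum>j<K. \<Sum>l<K. \<Sum>a\<in>{a. a < p \<and> k a = j}. \<Sum>b\<in>{b. b < p \<and> k b = l}. h a b)"
    by (rule regroup[OF kK])
  also have "\<dots> = (\<Sum>j<K. \<Sum>l<K. if j = l then 0 else T * (cd j l * block_l1 p k B j l))"
  proof (intro sum.cong refl)
    fix j l assume "j \<in> {..<K}" "l \<in> {..<K}"
    have "(\<Sum>a\<in>{a. a < p \<and> k a = j}. \<Sum>b\<in>{b. b < p \<and> k b = l}. h a b)
        = (\<Sum>a\<in>{a. a < p \<and> k a = j}. \<Sum>b\<in>{b. b < p \<and> k b = l}. if j = l then 0 else T * cd j l * \<bar>B a b\<bar>)"
      unfolding h_def using Bnn by (intro sum.cong refl) auto
    also have "\<dots> = (if j = l then 0 else T * (cd j l * block_l1 p k B j l))"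
      unfolding block_l1_def by (auto simp: sum_distrib_left mult.assoc)
    finally show "(\<Sum>a\<in>{a. a < p \<and> k a = j}. \<Sum>b\<in>{b. b < p \<and> k b = l}. h a b) = (if j = l then 0 else T * (cd j l * block_l1 p k B j l))" .
  qed
  also have "\<dots> = (\<Sum>j<K. \<Sum>l\<in>{..<K} - {j}. T * (cd j l * block_l1 p k B j l))"
  proof (rule sum.cong[OF refl])
    fix j assume "j \<in> {..<K}"
    have "(\<Sum>l<K. if j = l then 0 else T * (cd j l * block_l1 p k B j l)) = (\<Sum>l\<in>{..<K} - {j}. if j = l then 0 else T * (cd j l * block_l1 p k B j l))"
      by (intro sum.mono_neutral_right) auto
    also have "\<dots> = (\<Sum>l\<in>{..<K} - {j}. T * (cd j l * block_l1 p k B j l))" by (intro sum.cong) auto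
    finally show "(\<Sum>l<K. if j = l then 0 else T * (cd j l * block_l1 p k B j l)) = (\<Sum>l\<in>{..<K} - {j}. T * (cd j l * block_l1 p k B j l))" .
  qed
  also have "\<dots> = T * (\<Sum>j<K. \<Sum>l\<in>{..<K} - {j}. cd j l * block_l1 p k B j l)"
    by (simp add: sum_distrib_left)
  finally show ?thesis .
qed

lemma comp_meas:
  fixes M' :: "'t \<Rightarrow> (nat \<Rightarrow> real) measure"
  assumes MS: "\<forall>t\<in>I. M' t = PiM S (\<lambda>_. borel)"
  shows "(\<lambda>z. z t j) \<in> borel_measurable (PiM I M')"
proof (cases "t \<in> I")
  case True
  have eq: "M' t = PiM S (\<lambda>_. borel)" using MS True by blast
  have 1: "(\<lambda>z. z t) \<in> measurable (PiM I M') (PiM S (\<lambda>_. borel))"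
    by (subst eq[symmetric]) (rule measurable_component_singleton[OF True])
  show ?thesis
  proof (cases "j \<in> S")
    case True
    then have "(\<lambda>f. f j) \<in> borel_measurable (PiM S (\<lambda>_. borel :: real measure))"
      by (rule measurable_component_singleton)
    then show ?thesis using measurable_compose[OF 1] by blast
  next
    case False
    have c: "z t j = undefined" if z: "z \<in> space (PiM I M')" for z
    proof -
      have "z t \<in> space (PiM S (\<lambda>_. borel :: real measure))"
        by (rule measurable_space[OF 1 z])
      hence "z t \<in> PiE S (\<lambda>_. space (borel :: real measure))" by (simp only: space_PiM)
      thus "z t j = undefined" using False by (rule PiE_arb)
    qed
    have "(\<lambda>z. undefined) \<in> borel_measurable (PiM I M')" by (rule borel_measurable_const)
    thus ?thesis using measurable_cong[of "PiM I M'" "\<lambda>z. z t j" "\<lambda>z. undefined" borel] c by blast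
  qed
next
  case False
  have c: "z t j = undefined j" if z: "z \<in> space (PiM I M')" for z
  proof -
    have "z \<in> PiE I (\<lambda>i. space (M' i))" using z by (simp only: space_PiM)
    hence "z t = undefined" using False by (rule PiE_arb)
    thus ?thesis by simp
  qed
  have "(\<lambda>z. undefined j) \<in> borel_measurable (PiM I M')" by (rule borel_measurable_const)
  thus ?thesis using measurable_cong[of "PiM I M'" "\<lambda>z. z t j" "\<lambda>z. undefined j" borel] c by blast
qed

definition sr :: "nat + nat \<Rightarrow> nat" where "sr t = (case t of Inl i \<Rightarrow> i | Inr i \<Rightarrow> i)"

lemma sr_Inr[simp]: "sr (Inr i) = i" by (simp add: sr_def)

lemma pair_bound:
  fixes M :: "'w measure" and Z E :: "'w \<Rightarrow> nat \<Rightarrow> nat \<Rightarrow> real" and \<gamma> :: "nat \<Rightarrow> real"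
    and k :: "nat \<Rightarrow> nat" and p K n :: nat and \<Gamma> T :: real
  assumes PS: "prob_space M" and p4: "p \<ge> 4" and kK: "\<forall>a<p. k a < K" and gpos: "\<forall>j<K. \<gamma> j > 0"
    and GE: "\<forall>i<n. gaussian_vec M {..<p} (\<lambda>a b. if a = b then \<gamma> (k a) else 0) (\<lambda>w. E w i)"
    and IND: "prob_space.indep_vars M
        (\<lambda>t. case t of Inl i \<Rightarrow> PiM {..<K} (\<lambda>_. (borel :: real measure))
                     | Inr i \<Rightarrow> PiM {..<p} (\<lambda>_. (borel :: real measure)))
        (\<lambda>t w. case t of Inl i \<Rightarrow> (\<lambda>j\<in>{..<K}. Z w i j)
                       | Inr i \<Rightarrow> (\<lambda>a\<in>{..<p}. E w i a))
        (Inl ` {..<n} \<union> Inr ` {..<n})"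
    and ab: "a < p" "b < p" "k a \<noteq> k b"
    and Gam: "\<forall>a<p. \<gamma> (k a) \<le> \<Gamma>" and T_def: "T = 8 * sqrt (ln (real p)) * sqrt \<Gamma>"
  shows "{w\<in>space M. T * col_dist n (Z w) (k a) (k b) < \<bar>W2 n k (Z w) (E w) a b\<bar>} \<in> sets M \<and>
         measure M {w\<in>space M. T * col_dist n (Z w) (k a) (k b) < \<bar>W2 n k (Z w) (E w) a b\<bar>} \<le> 1 / real p ^ 3"
proof -
  interpret prob_space M by (rule PS)
  define M' :: "nat + nat \<Rightarrow> (nat \<Rightarrow> real) measure" where
    "M' = (\<lambda>t. case t of Inl i \<Rightarrow> PiM {..<K} (\<lambda>_. (borel :: real measure))
                     | Inr i \<Rightarrow> PiM {..<p} (\<lambda>_. (borel :: real measure)))"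
  define Xv where "Xv = (\<lambda>t w. case t of Inl i \<Rightarrow> (\<lambda>j\<in>{..<K}. Z w i j)
                       | Inr i \<Rightarrow> (\<lambda>a\<in>{..<p}. E w i a))"
  define IA :: "(nat + nat) set" where "IA = Inl ` {..<n}"
  define IB :: "(nat + nat) set" where "IB = Inr ` {..<n}"
  have ind: "indep_vars M' Xv (IA \<union> IB)" using IND unfolding M'_def Xv_def IA_def IB_def .
  define ZV where "ZV = (\<lambda>w. restrict (\<lambda>t. Xv t w) IA)"
  define EV where "EV = (\<lambda>w. restrict (\<lambda>t. Xv t w) IB)"
  have indZE: "indep_var (PiM IA M') ZV (PiM IB M') EV"
    unfolding ZV_def EV_def by (rule indep_var_restrict[OF ind]) (auto simp: IA_def IB_def)
  have rvZ: "ZV \<in> measurable M (PiM IA M')" and rvE: "EV \<in> measurable M (PiM IB M')"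
    using indZE by (blast dest: indep_var_rv1 indep_var_rv2)+
  have mZ: "(\<lambda>z. z t j) \<in> borel_measurable (PiM IA M')" for t j
    by (rule comp_meas[where S="{..<K}"]) (auto simp: M'_def IA_def)
  have mE: "(\<lambda>z. z t j) \<in> borel_measurable (PiM IB M')" for t j
    by (rule comp_meas[where S="{..<p}"]) (auto simp: M'_def IB_def)
  have mZ'[measurable]: "(\<lambda>ze. fst ze t j) \<in> borel_measurable (PiM IA M' \<Otimes>\<^sub>M PiM IB M')" for t j
    by (rule measurable_compose[OF measurable_fst mZ])
  have mE'[measurable]: "(\<lambda>ze. snd ze t j) \<in> borel_measurable (PiM IA M' \<Otimes>\<^sub>M PiM IB M')" for t j
    by (rule measurable_compose[OF measurable_snd mE])
  define ga where "ga = \<gamma> (k a)"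
  define gb where "gb = \<gamma> (k b)"
  have gapos: "ga > 0" and gbpos: "gb > 0" unfolding ga_def gb_def using gpos kK ab by auto
  have gaG: "ga \<le> \<Gamma>" and gbG: "gb \<le> \<Gamma>" unfolding ga_def gb_def using Gam ab by auto
  have Gpos: "\<Gamma> > 0" using gapos gaG by linarith
  have lnp: "ln (real p) > 0" using p4 by simp
  define x where "x = T / sqrt (ga + gb)"
  have sq: "sqrt (ga + gb) > 0" using gapos gbpos by simp
  have Tpos: "T > 0" unfolding T_def using lnp Gpos by simp
  have xpos: "x > 0" unfolding x_def using Tpos sq by simp
  have xT: "x * sqrt (ga + gb) = T" unfolding x_def using sq by simp
  have xx: "x^2 \<ge> 32 * ln (real p)"
  proof -
    have "x^2 = T^2 / (ga + gb)" unfolding x_def using gapos gbpos by (simp add: power_divide)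
    also have "T^2 = 64 * ln (real p) * \<Gamma>" unfolding T_def using lnp Gpos by (simp add: power_mult_distrib)
    finally have x2: "x^2 = 64 * ln (real p) * \<Gamma> / (ga + gb)" .
    have "32 * ln (real p) * (ga + gb) \<le> 64 * ln (real p) * \<Gamma>"
      using gaG gbG lnp by (simp add: mult_left_mono)
    thus ?thesis unfolding x2 using gapos gbpos by (simp add: pos_le_divide_eq)
  qed
  define kk where "kk = nat \<lceil>3 * ln (real p)\<rceil>"
  have num: "(2 * real kk) ^ kk / x^(2*kk) \<le> 1 / real p ^ 3"
    unfolding kk_def by (rule numerics[OF p4 xpos xx])
  define G :: "(nat + nat \<Rightarrow> nat \<Rightarrow> real) \<times> (nat + nat \<Rightarrow> nat \<Rightarrow> real) \<Rightarrow> ennreal" where "G = (\<lambda>ze. if T * sqrt (\<Sum>i<n. (fst ze (Inl i) (k a) - fst ze (Inl i) (k b))^2)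
        < \<bar>\<Sum>i<n. (snd ze (Inr i) b - snd ze (Inr i) a) * (fst ze (Inl i) (k a) - fst ze (Inl i) (k b))\<bar>
        then 1 else (0::ennreal))"
  have Gm: "G \<in> borel_measurable (PiM IA M' \<Otimes>\<^sub>M PiM IB M')" unfolding G_def by measurable
  define Bad where "Bad = {w\<in>space M. T * col_dist n (Z w) (k a) (k b) < \<bar>W2 n k (Z w) (E w) a b\<bar>}"
  have ZVe: "ZV w (Inl i) j = Z w i j" if "i < n" "j < K" for w i j
    using that unfolding ZV_def Xv_def IA_def by simp
  have EVe: "EV w (Inr i) c = E w i c" if "i < n" "c < p" for w i c
    using that unfolding EV_def Xv_def IB_def by simp
  have kaK: "k a < K" and kbK: "k b < K" using kK ab by auto
  have key: "G (ZV w, EV w) = indicator Bad w" if w: "w \<in> space M" for w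
  proof -
    have s1: "(\<Sum>i<n. (ZV w (Inl i) (k a) - ZV w (Inl i) (k b))^2) = (\<Sum>i<n. (Z w i (k a) - Z w i (k b))^2)"
      by (intro sum.cong refl) (simp add: ZVe kaK kbK)
    have s2: "(\<Sum>i<n. (EV w (Inr i) b - EV w (Inr i) a) * (ZV w (Inl i) (k a) - ZV w (Inl i) (k b)))
        = W2 n k (Z w) (E w) a b"
      unfolding W2_def by (intro sum.cong refl) (simp add: ZVe EVe kaK kbK ab)
    show ?thesis unfolding G_def Bad_def col_dist_def using s1 s2 w by (simp add: indicator_def)
  qed
  have fm: "(\<lambda>w. G (ZV w, EV w)) \<in> borel_measurable M"
    by (rule measurable_compose[OF measurable_Pair[OF rvZ rvE] Gm])
  have BadS: "Bad \<in> sets M"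
  proof -
    have "Bad = (\<lambda>w. G (ZV w, EV w)) -` {1} \<inter> space M"
      using key by (auto simp: indicator_def Bad_def)
    thus ?thesis using measurable_sets[OF fm, of "{1}"] by simp
  qed
  have inner: "(\<integral>\<^sup>+ w. G (z, EV w) \<partial>M) \<le> ennreal (1 / real p ^ 3)" if z: "z \<in> space (PiM IA M')" for z
  proof -
    define c :: "nat + nat \<Rightarrow> real" where "c = (\<lambda>t. z (Inl (sr t)) (k a) - z (Inl (sr t)) (k b))"
    define F :: "nat + nat \<Rightarrow> 'w \<Rightarrow> nat \<Rightarrow> real" where "F = (\<lambda>t w. E w (sr t))"
    define S where "S = {w\<in>space M. x * sqrt (ga + gb) * sqrt (\<Sum>t\<in>IB. (c t)^2) < \<bar>\<Sum>t\<in>IB. (F t w b - F t w a) * c t\<bar>}"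
    have Fe: "F (Inr i) = (\<lambda>w. E w i)" for i unfolding F_def by simp
    have indB: "indep_vars (\<lambda>_. PiM {..<p} (\<lambda>_. borel)) (\<lambda>t w. restrict (F t w) {..<p}) IB"
    proof -
      have "indep_vars M' Xv IB" by (rule indep_vars_subset[OF ind]) auto
      moreover have "indep_vars M' Xv IB \<longleftrightarrow> indep_vars (\<lambda>_. PiM {..<p} (\<lambda>_. borel)) (\<lambda>t w. restrict (F t w) {..<p}) IB"
        by (rule indep_vars_cong) (auto simp: IB_def M'_def Xv_def Fe restrict_def intro!: ext)
      ultimately show ?thesis by blast
    qed
    have GB: "gaussian_vec M {..<p} (\<lambda>a b. if a = b then (\<lambda>a. \<gamma> (k a)) a else 0) (F t)" if "t \<in> IB" for t
      using that GE unfolding IB_def F_def by auto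
    have tail: "measure M S \<le> (2 * real kk) ^ kk / x^(2*kk)"
      unfolding S_def ga_def gb_def
      by (rule E_tail[where g="\<lambda>a. \<gamma> (k a)" and k=kk and c=c, OF _ indB GB ab(1,2) _ _ _ xpos])
         (use ab gapos gbpos in \<open>auto simp: IB_def ga_def gb_def\<close>)
    have Gz: "G (z, EV w) = indicator S w" if w: "w \<in> space M" for w
    proof -
      have r1: "(\<Sum>t\<in>IB. (c t)^2) = (\<Sum>i<n. (z (Inl i) (k a) - z (Inl i) (k b))^2)"
        unfolding IB_def c_def by (subst sum.reindex) auto
      have r2: "(\<Sum>t\<in>IB. (F t w b - F t w a) * c t) = (\<Sum>i<n. (EV w (Inr i) b - EV w (Inr i) a) * (z (Inl i) (k a) - z (Inl i) (k b)))"
        unfolding IB_def c_def F_def by (subst sum.reindex) (auto simp: EVe ab intro!: sum.cong)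
      show ?thesis using w r1 r2 xT by (simp add: G_def S_def indicator_def)
    qed
    have fz: "(\<lambda>w. G (z, EV w)) \<in> borel_measurable M"
      by (rule measurable_compose[OF rvE measurable_Pair2[OF Gm z]])
    have SS: "S \<in> sets M"
    proof -
      have "S = (\<lambda>w. G (z, EV w)) -` {1} \<inter> space M"
        using Gz by (auto simp: indicator_def S_def)
      thus ?thesis using measurable_sets[OF fz, of "{1}"] by simp
    qed
    have "(\<integral>\<^sup>+ w. G (z, EV w) \<partial>M) = (\<integral>\<^sup>+ w. indicator S w \<partial>M)"
      by (rule nn_integral_cong) (rule Gz)
    also have "\<dots> = emeasure M S" using SS by simp
    also have "\<dots> = ennreal (measure M S)" by (simp add: emeasure_eq_measure)
    also have "\<dots> \<le> ennreal (1 / real p ^ 3)" using tail num by (intro ennreal_leI) linarith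
    finally show ?thesis .
  qed
  have "emeasure M Bad = (\<integral>\<^sup>+ w. indicator Bad w \<partial>M)" using BadS by simp
  also have "\<dots> = (\<integral>\<^sup>+ w. G (ZV w, EV w) \<partial>M)"
    by (rule nn_integral_cong) (simp add: key)
  also have "\<dots> \<le> ennreal (1 / real p ^ 3)"
    by (rule indep_bound[OF indZE Gm inner])
  finally have "measure M Bad \<le> 1 / real p ^ 3"
    by (simp add: emeasure_eq_measure ennreal_le_iff)
  thus ?thesis using BadS unfolding Bad_def by blast
qed

lemma main_lemma:
  fixes M :: "'w measure" and p K n :: nat and k :: "nat \<Rightarrow> nat" and C :: "nat \<Rightarrow> nat \<Rightarrow> real"
    and \<gamma> :: "nat \<Rightarrow> real" and Z E :: "'w \<Rightarrow> nat \<Rightarrow> nat \<Rightarrow> real"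
  assumes H: "prob_space M \<and> p \<ge> 1 \<and> is_partition_map p K k \<and> (\<forall>j<K. \<gamma> j > 0) \<and>
      (\<forall>i<n. gaussian_vec M {..<K} C (\<lambda>w. Z w i)) \<and>
      (\<forall>i<n. gaussian_vec M {..<p} (\<lambda>a b. if a = b then \<gamma> (k a) else 0) (\<lambda>w. E w i)) \<and>
      prob_space.indep_vars M
        (\<lambda>t. case t of Inl i \<Rightarrow> PiM {..<K} (\<lambda>_. (borel :: real measure))
                     | Inr i \<Rightarrow> PiM {..<p} (\<lambda>_. (borel :: real measure)))
        (\<lambda>t w. case t of Inl i \<Rightarrow> (\<lambda>j\<in>{..<K}. Z w i j)
                       | Inr i \<Rightarrow> (\<lambda>a\<in>{..<p}. E w i a))
        (Inl ` {..<n} \<union> Inr ` {..<n})"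
  shows "\<exists>A \<in> sets M. measure M A \<ge> 1 - 3 / real p \<and>
          (\<forall>w\<in>A. \<forall>B\<in>C0 p.
             \<bar>frob_inner p (W2 n k (Z w) (E w)) (\<lambda>a b. Bstar p k a b - B a b)\<bar>
             \<le> 8 * sqrt (ln (real p)) * sqrt (Gamma_sup p k \<gamma>) *
               (\<Sum>j<K. \<Sum>l\<in>{..<K} - {j}. col_dist n (Z w) j l * block_l1 p k B j l))"
proof -
  have PS: "prob_space M" and p1: "p \<ge> 1" and part: "is_partition_map p K k" and gpos: "\<forall>j<K. \<gamma> j > 0"
    and GE: "\<forall>i<n. gaussian_vec M {..<p} (\<lambda>a b. if a = b then \<gamma> (k a) else 0) (\<lambda>w. E w i)"
    and IND: "prob_space.indep_vars M
        (\<lambda>t. case t of Inl i \<Rightarrow> PiM {..<K} (\<lambda>_. (borel :: real measure))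
                     | Inr i \<Rightarrow> PiM {..<p} (\<lambda>_. (borel :: real measure)))
        (\<lambda>t w. case t of Inl i \<Rightarrow> (\<lambda>j\<in>{..<K}. Z w i j)
                       | Inr i \<Rightarrow> (\<lambda>a\<in>{..<p}. E w i a))
        (Inl ` {..<n} \<union> Inr ` {..<n})"
    using H by blast+
  interpret prob_space M by (rule PS)
  have kK: "\<forall>a<p. k a < K" using part unfolding is_partition_map_def by blast
  show ?thesis
  proof (cases "p \<le> 3")
    case True
    have "1 - 3 / real p \<le> 0" using True p1 by (simp add: field_simps)
    thus ?thesis by (intro bexI[of _ "{}"]) auto
  next
    case False
    hence p4: "p \<ge> 4" by simp
    define \<Gamma> where "\<Gamma> = Gamma_sup p k \<gamma>"
    have Gam: "\<forall>a<p. \<gamma> (k a) \<le> \<Gamma>"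
      unfolding \<Gamma>_def Gamma_sup_def by (auto intro!: Max_ge)
    define T where "T = 8 * sqrt (ln (real p)) * sqrt \<Gamma>"
    define Pairs :: "(nat \<times> nat) set" where "Pairs = {ab. fst ab < p \<and> snd ab < p \<and> k (fst ab) \<noteq> k (snd ab)}"
    define BadP where "BadP = (\<lambda>ab. {w\<in>space M. T * col_dist n (Z w) (k (fst ab)) (k (snd ab)) < \<bar>W2 n k (Z w) (E w) (fst ab) (snd ab)\<bar>})"
    have PB: "BadP ab \<in> sets M \<and> measure M (BadP ab) \<le> 1 / real p ^ 3" if "ab \<in> Pairs" for ab
      unfolding BadP_def
      by (rule pair_bound[OF PS p4 kK gpos GE IND _ _ _ Gam T_def]) (use that in \<open>auto simp: Pairs_def\<close>)
    have subP: "Pairs \<subseteq> {..<p} \<times> {..<p}" unfolding Pairs_def by auto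
    have finP: "finite Pairs" by (rule finite_subset[OF subP]) auto
    have cardP: "card Pairs \<le> p * p"
      using card_mono[OF _ subP] by (simp add: card_cartesian_product)
    define U where "U = (\<Union>ab\<in>Pairs. BadP ab)"
    have US: "U \<in> sets M" unfolding U_def using PB finP by (intro sets.finite_UN) auto
    have "measure M U \<le> (\<Sum>ab\<in>Pairs. measure M (BadP ab))"
      unfolding U_def by (rule finite_measure_subadditive_finite[OF finP]) (use PB in auto)
    also have "\<dots> \<le> (\<Sum>ab\<in>Pairs. 1 / real p ^ 3)" by (intro sum_mono) (use PB in auto)
    also have "\<dots> = real (card Pairs) / real p ^ 3" by simp
    also have "\<dots> \<le> real (p * p) / real p ^ 3"
    proof (rule divide_right_mono)
      show "real (card Pairs) \<le> real (p * p)" using cardP by (simp only: of_nat_le_iff)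
    qed simp
    also have "\<dots> = 1 / real p" using p4 by (simp add: power3_eq_cube)
    finally have mU: "measure M U \<le> 1 / real p" .
    define A where "A = space M - U"
    have AS: "A \<in> sets M" unfolding A_def using US by auto
    have mA: "measure M A \<ge> 1 - 3 / real p"
    proof -
      have "measure M A = 1 - measure M U" unfolding A_def by (rule prob_compl[OF US])
      moreover have "1 / real p \<le> 3 / real p" using p4 by (simp add: divide_right_mono)
      ultimately show ?thesis using mU by linarith
    qed
    have good: "\<bar>frob_inner p (W2 n k (Z w) (E w)) (\<lambda>a b. Bstar p k a b - B a b)\<bar>
             \<le> 8 * sqrt (ln (real p)) * sqrt (Gamma_sup p k \<gamma>) *
               (\<Sum>j<K. \<Sum>l\<in>{..<K} - {j}. col_dist n (Z w) j l * block_l1 p k B j l)"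
      if w: "w \<in> A" and B: "B \<in> C0 p" for w B
    proof -
      have wM: "w \<in> space M" and wU: "w \<notin> U" using w unfolding A_def by auto
      have "\<bar>frob_inner p (W2 n k (Z w) (E w)) (\<lambda>a b. Bstar p k a b - B a b)\<bar>
          \<le> T * (\<Sum>j<K. \<Sum>l\<in>{..<K} - {j}. col_dist n (Z w) j l * block_l1 p k B j l)"
      proof (rule det_bound[OF kK])
        fix a b assume "a < p" "b < p" "k a = k b"
        thus "W2 n k (Z w) (E w) a b = 0" unfolding W2_def by simp
      next
        fix a b assume ab: "a < p" "b < p" "k a \<noteq> k b"
        hence "(a, b) \<in> Pairs" unfolding Pairs_def by simp
        hence "w \<notin> BadP (a, b)" using wU unfolding U_def by blast
        thus "\<bar>W2 n k (Z w) (E w) a b\<bar> \<le> T * col_dist n (Z w) (k a) (k b)"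
          using wM unfolding BadP_def by auto
      next
        fix a b assume "a < p" "b < p"
        thus "0 \<le> B a b" using B unfolding C0_def by blast
      qed
      thus ?thesis unfolding T_def \<Gamma>_def .
    qed
    show ?thesis using AS mA good by blast
  qed
qed

theorem mainTheorem12:
  "\<exists>c1 c0'. c1 > 0 \<and> c0' > 0 \<and>
    (\<forall>(M :: 'w measure) (p::nat) (K::nat) (n::nat) (k :: nat \<Rightarrow> nat)
       (C :: nat \<Rightarrow> nat \<Rightarrow> real) (\<gamma> :: nat \<Rightarrow> real)
       (Z :: 'w \<Rightarrow> nat \<Rightarrow> nat \<Rightarrow> real) (E :: 'w \<Rightarrow> nat \<Rightarrow> nat \<Rightarrow> real).
      prob_space M \<and> p \<ge> 1 \<and> is_partition_map p K k \<and> (\<forall>j<K. \<gamma> j > 0) \<and>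
      (\<forall>i<n. gaussian_vec M {..<K} C (\<lambda>w. Z w i)) \<and>
      (\<forall>i<n. gaussian_vec M {..<p} (\<lambda>a b. if a = b then \<gamma> (k a) else 0) (\<lambda>w. E w i)) \<and>
      prob_space.indep_vars M
        (\<lambda>t. case t of Inl i \<Rightarrow> PiM {..<K} (\<lambda>_. (borel :: real measure))
                     | Inr i \<Rightarrow> PiM {..<p} (\<lambda>_. (borel :: real measure)))
        (\<lambda>t w. case t of Inl i \<Rightarrow> (\<lambda>j\<in>{..<K}. Z w i j)
                       | Inr i \<Rightarrow> (\<lambda>a\<in>{..<p}. E w i a))
        (Inl ` {..<n} \<union> Inr ` {..<n})
    \<longrightarrow> (\<exists>A \<in> sets M. measure M A \<ge> 1 - c0' / real p \<and>
          (\<forall>w\<in>A. \<forall>B\<in>C0 p.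
             \<bar>frob_inner p (W2 n k (Z w) (E w)) (\<lambda>a b. Bstar p k a b - B a b)\<bar>
             \<le> c1 * sqrt (ln (real p)) * sqrt (Gamma_sup p k \<gamma>) *
               (\<Sum>j<K. \<Sum>l\<in>{..<K} - {j}. col_dist n (Z w) j l * block_l1 p k B j l))))"
  apply (rule exI[of _ "8::real"], rule exI[of _ "3::real"])
  apply (intro conjI)
    apply simp
   apply simp
  apply (intro allI impI)
  apply (erule main_lemma)
  done

end
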